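(* Let $\alpha,\delta\in(0,1)$, $m=\alpha n$, $k>-\frac{\ln\left(\frac{2}{1+\delta}-1\right)}{\ln(1+\delta)}$, and let $\lambda^*<\frac12$ satisfy $H(\lambda^* )=\alpha\log_2(1+\delta)$. Then for all $\lambda<\lambda^*$, $$\lim_{n\to\infty}\sum_{1\le w\le\lambda n}\binom{n}{w}\frac{1}{2^m}\left(1+\left(1-2\frac{k\ln m}{m}\right)^w\right)^m=0.$$
   Context: $H(p)=-p\log_2p-(1-p)\log_2(1-p)$ is the binary entropy function; $\ln$ is the natural logarithm. *)

theory Defs
  imports Complex_Main
begin

definition bin_entropy :: "real \<Rightarrow> real" where
  "bin_entropy p = - p * log 2 p - (1 - p) * log 2 (1 - p)"

end

theory Submission imports Defs "HOL-Analysis.Analysis" "HOL-Real_Asymp.Real_Asymp" begin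

lemma P1:
  fixes q s u :: real
  assumes q0: "0 < q" and q1: "q < 1" and sdef: "s = ln (2/(1+q)) / ln (1/q)"
    and u: "q \<le> u" "u \<le> 1"
  shows "(1+u)/2 \<le> u powr s"
proof -
  have l1: "ln (1/q) > 0" using q0 q1 by simp
  have l2: "ln (2/(1+q)) > 0" using q0 q1 by simp
  have l3: "ln (2/(1+q)) < ln (1/q)" using q0 q1 by (simp add: field_simps)
  have s0: "s > 0" using l1 l2 sdef by simp
  have s1: "s < 1" using l1 l3 sdef by simp
  define a where "a = (1+q)/2"
  have qa: "q powr s = a"
  proof -
    have "q powr s = exp (s * ln q)" using q0 by (simp add: powr_def)
    also have "s * ln q = - ln (2/(1+q))" using sdef l1 q0 by (simp add: ln_div)
    also have "exp (- ln (2/(1+q))) = a" apply (subst exp_minus, subst exp_ln) using q0 a_def by auto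
    finally show ?thesis .
  qed
  define v where "v = u powr s"
  have u0: "u > 0" using u q0 by simp
  have va: "a \<le> v" unfolding v_def qa[symmetric] using u q0 s0 by (simp add: powr_mono2)
  have v1: "v \<le> 1" unfolding v_def using u u0 s0 by (simp add: powr_le1)
  have a1: "a < 1" using a_def q1 by simp
  have a0: "a > 0" using a_def q0 by simp
  define p where "p = 1/s"
  have p1: "p \<ge> 1" using s0 s1 p_def by simp
  have vp: "v powr p = u" unfolding v_def p_def using u0 s0 by (simp add: powr_powr)
  have ap: "a powr p = q" unfolding p_def qa[symmetric] using q0 s0 by (simp add: powr_powr)
  define t where "t = (v - a)/(1-a)"
  have t0: "t \<ge> 0" "t \<le> 1" unfolding t_def using va v1 a1 by (auto simp: divide_simps)
  have vt: "v = (1-t)*a + t*1" using a1 t_def by (simp add: field_simps)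
  have "v powr p \<le> (1-t) * a powr p + t * 1 powr p"
    using convex_onD[OF powr_convex[OF p1], of t a 1] t0 a0 vt by simp
  then have "u \<le> (1-t)*q + t" using vp ap by simp
  also have "(1-t)*q + t = 2 * v - 1" unfolding vt a_def by (simp add: field_simps)
  finally show ?thesis unfolding v_def by simp
qed

lemma choose_le_pow_real: "real (n choose w) \<le> real n ^ w"
proof (cases "w \<le> n")
  case True then show ?thesis using binomial_le_pow[OF True]
    by (metis of_nat_le_iff of_nat_power)
next
  case False then show ?thesis by (simp add: binomial_eq_0)
qed

lemma term_bound:
  fixes x q s c :: real and n m w :: nat
  assumes x0: "0 < x" and x1: "x < 1" and q0: "0 < q" and q1: "q < 1"
    and sdef: "s = ln (2/(1+q)) / ln (1/q)"
    and xc: "ln x \<le> - c" and w1: "w \<ge> 1"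
  shows "real (n choose w) * (1 / 2 ^ m) * (1 + x ^ w) ^ m
     \<le> (real n * exp (- c * s * m)) ^ w + real (n choose w) * ((1+q)/2) ^ m"
proof -
  have eq: "real (n choose w) * (1 / 2 ^ m) * (1 + x ^ w) ^ m = real (n choose w) * ((1 + x^w)/2)^m"
    by (simp add: power_divide)
  have l1: "ln (1/q) > 0" using q0 q1 by simp
  have l2: "ln (2/(1+q)) > 0" using q0 q1 by simp
  have s0: "s > 0" using l1 l2 sdef by simp
  have xw0: "x^w > 0" using x0 by simp
  have xw1: "x^w \<le> 1" using x0 x1 by (simp add: power_le_one)
  show ?thesis
  proof (cases "q \<le> x^w")
    case True
    have "(1 + x^w)/2 \<le> (x^w) powr s" using P1[OF q0 q1 sdef True xw1] .
    also have "(x^w) powr s = exp (s * w * ln x)" using x0 by (simp add: powr_def ln_realpow)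
    also have "\<dots> \<le> exp (- c * s * w)"
    proof -
      have "s * w * ln x \<le> s * w * (-c)" by (rule mult_left_mono) (use xc s0 in auto)
      then show ?thesis by (simp add: algebra_simps)
    qed
    finally have h: "(1 + x^w)/2 \<le> exp (- c * s * w)" .
    have "((1 + x^w)/2)^m \<le> exp (- c * s * w)^m"
      by (rule power_mono[OF h]) (use xw0 in simp)
    also have "\<dots> = exp (- c * s * m) ^ w"
      by (simp add: exp_of_nat_mult[symmetric] algebra_simps)
    finally have h2: "((1 + x^w)/2)^m \<le> exp (- c * s * m) ^ w" .
    have "real (n choose w) * ((1 + x^w)/2)^m \<le> real n ^ w * exp (- c * s * m) ^ w"
      by (rule mult_mono[OF choose_le_pow_real h2]) (use xw0 in auto)
    moreover have "0 \<le> real (n choose w) * ((1+q)/2)^m" using q0 by simp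
    ultimately show ?thesis unfolding eq by (simp add: power_mult_distrib)
  next
    case False
    have "((1 + x^w)/2)^m \<le> ((1+q)/2)^m"
      by (rule power_mono) (use False xw0 in auto)
    then have "real (n choose w) * ((1 + x^w)/2)^m \<le> real (n choose w) * ((1+q)/2)^m"
      by (simp add: mult_left_mono)
    moreover have "0 \<le> (real n * exp (- c * s * m)) ^ w" by simp
    ultimately show ?thesis unfolding eq by linarith
  qed
qed

lemma binom_partial:
  fixes n N :: nat and L :: real
  assumes L0: "0 < L" and L1: "L < 1/2" and N: "real N \<le> L * n"
  shows "(\<Sum>w\<in>{1..N}. real (n choose w)) \<le> 2 powr (bin_entropy L * n)"
proof -
  define th where "th = L/(1-L)"
  have th0: "th > 0" and th1: "th \<le> 1" unfolding th_def using L0 L1 by (auto simp: divide_simps)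
  have Nn: "N \<le> n"
  proof -
    have "real N \<le> real n" proof -
      have "L * real n \<le> 1 * real n" by (rule mult_right_mono) (use L1 in auto)
      then show ?thesis using N by simp
    qed
    then show ?thesis by simp
  qed
  have "(\<Sum>w\<in>{1..N}. real (n choose w)) \<le> (\<Sum>w\<in>{1..N}. real (n choose w) * th^w * th powr (- L * n))"
  proof (rule sum_mono)
    fix w assume w: "w \<in> {1..N}"
    have "th^w * th powr (- L * n) = th powr (real w - L * n)"
      using th0 by (simp add: powr_realpow[symmetric] powr_add[symmetric])
    also have "\<dots> = exp ((real w - L * n) * ln th)" using th0 by (simp add: powr_def)
    also have "\<dots> \<ge> 1"
    proof -
      have "real w - L * n \<le> 0" using w N by auto
      moreover have "ln th \<le> 0" using th0 th1 by simp
      ultimately have "(real w - L * n) * ln th \<ge> 0" by (simp add: mult_nonpos_nonpos)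
      then show ?thesis by simp
    qed
    finally have "th^w * th powr (- L * n) \<ge> 1" .
    then have "real (n choose w) * 1 \<le> real (n choose w) * (th^w * th powr (- L * n))"
      by (intro mult_left_mono) auto
    then show "real (n choose w) \<le> real (n choose w) * th^w * th powr (- L * n)" by (simp add: mult.assoc)
  qed
  also have "\<dots> = (\<Sum>w\<in>{1..N}. real (n choose w) * th^w) * th powr (- L * n)"
    by (simp add: sum_distrib_right)
  also have "\<dots> \<le> (\<Sum>w\<le>n. real (n choose w) * th^w) * th powr (- L * n)"
  proof (intro mult_right_mono sum_mono2)
    show "{1..N} \<subseteq> {..n}" using Nn by auto
  qed (use th0 in auto)
  also have "(\<Sum>w\<le>n. real (n choose w) * th^w) = (th + 1)^n"
    using binomial_ring[of th 1 n] by simp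
  also have "(th + 1)^n * th powr (- L * n) = 2 powr (bin_entropy L * n)"
  proof -
    have a: "(th + 1)^n = exp (n * (- ln (1 - L)))"
    proof -
      have "th + 1 = 1/(1-L)" using th_def L1 by (simp add: field_simps)
      then have "(th+1)^n = exp (ln (1/(1-L))) ^ n" using L1 by simp
      also have "\<dots> = exp (n * ln (1/(1-L)))" by (simp add: exp_of_nat_mult[symmetric])
      finally show ?thesis using L1 by (simp add: ln_div)
    qed
    have b: "th powr (- L * n) = exp (- L * n * (ln L - ln (1 - L)))"
      using th0 L0 L1 th_def by (simp add: powr_def ln_div)
    have c: "2 powr (bin_entropy L * n) = exp (bin_entropy L * n * ln 2)"
      by (simp add: powr_def)
    have d: "bin_entropy L * ln 2 = - L * ln L - (1 - L) * ln (1 - L)"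
      unfolding bin_entropy_def log_def by (simp add: field_simps)
    show ?thesis unfolding a b c exp_add[symmetric]
    proof (rule arg_cong[where f=exp])
      have "bin_entropy L * n * ln 2 = n * (bin_entropy L * ln 2)" by simp
      also have "\<dots> = n * (- L * ln L - (1 - L) * ln (1 - L))" using d by simp
      finally show "n * (- ln (1 - L)) + - L * n * (ln L - ln (1 - L)) = bin_entropy L * n * ln 2"
        by (simp add: algebra_simps)
    qed
  qed
  finally show ?thesis .
qed

lemma geom_bound:
  fixes r :: real assumes r0: "0 \<le> r" and r1: "r \<le> 1/2"
  shows "(\<Sum>w\<in>{1..N}. r^w) \<le> 2 * r"
proof -
  have e: "(\<Sum>w\<in>{1..N}. r^w) = r * (\<Sum>i<N. r^i)"
    by (induction N) (auto simp: sum_distrib_left distrib_left)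
  have "(\<Sum>i<N. r^i) = (1 - r^N)/(1 - r)" using r1 by (simp add: sum_gp_strict)
  also have "\<dots> \<le> 1/(1-r)" using r0 r1 by (simp add: divide_right_mono)
  also have "\<dots> \<le> 2" using r0 r1 by (simp add: field_simps)
  finally have "(\<Sum>i<N. r^i) \<le> 2" .
  then show ?thesis unfolding e using r0 by (simp add: mult_left_mono mult.commute)
qed

lemma lnx_lim: "((\<lambda>y::real. ln y / y) \<longlongrightarrow> 0) at_top"
  by real_asymp

theorem lemma7:
  fixes \<alpha> \<delta> k lstar lam :: real
  assumes "0 < \<alpha>" "\<alpha> < 1" "0 < \<delta>" "\<delta> < 1"
    and "k > - ln (2 / (1 + \<delta>) - 1) / ln (1 + \<delta>)"
    and "0 < lstar" "lstar < 1/2"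
    and "bin_entropy lstar = \<alpha> * log 2 (1 + \<delta>)"
    and "lam < lstar"
  shows "(\<lambda>n. let m = nat \<lfloor>\<alpha> * real n\<rfloor> in
            \<Sum>w\<in>{1..nat \<lfloor>lam * real n\<rfloor>}.
              real (n choose w) * (1 / 2 ^ m) *
              (1 + (1 - 2 * (k * ln (real m) / real m)) ^ w) ^ m)
         \<longlonglongrightarrow> 0"
proof -
  note a = assms
  define q0 where "q0 = (1-\<delta>)/(1+\<delta>)"
  define q where "q = q0^2"
  define s where "s = ln (2/(1+q)) / ln (1/q)"
  define bt where "bt = 2 * k * s"
  define rh where "rh = (1+\<delta>)*(1+q)/2"
  have q0p: "0 < q0" "q0 < 1" unfolding q0_def using a(3,4) by (auto simp: divide_simps)
  have qp: "0 < q" "q < q0" "q < 1"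
  proof -
    show "0 < q" unfolding q_def using q0p by simp
    show "q < q0" unfolding q_def using q0p by (simp add: power2_eq_square)
    then show "q < 1" using q0p by simp
  qed
  have l1: "ln (1/q) > 0" using qp by simp
  have l2: "ln (2/(1+q)) > 0" using qp by simp
  have s0: "s > 0" using l1 l2 s_def by simp
  have hq0: "2/(1+\<delta>) - 1 = q0" unfolding q0_def using a(3) by (simp add: field_simps)
  have lnd: "ln (1+\<delta>) > 0" using a(3) by simp
  have lnq0: "ln (1/q0) > 0" using q0p by simp
  have kgt: "k > ln (1/q0) / ln (1+\<delta>)" using a(5) hq0 q0p by (simp add: ln_div)
  have k0: "k > 0" using kgt lnq0 lnd by (smt (verit) divide_pos_pos)
  have gt: "ln (2/(1+q)) > ln (1+\<delta>)"
  proof -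
    have "(1+\<delta>)*(1+q0) = 2" unfolding q0_def using a(3) by (simp add: field_simps)
    then have "(1+\<delta>)*(1+q) < 2" using qp a(3) by (smt (verit) mult_strict_left_mono)
    then have "1+\<delta> < 2/(1+q)" using qp by (simp add: field_simps)
    then show ?thesis using a(3) qp by (intro ln_less_cancel_iff[THEN iffD2]) auto
  qed
  have lnq: "ln (1/q) = 2 * ln (1/q0)"
    unfolding q_def using q0p by (simp add: ln_div ln_realpow)
  have bt1: "bt > 1"
  proof -
    have "k * ln (1+\<delta>) > ln (1/q0)" using kgt lnd by (simp add: pos_divide_less_eq)
    moreover have "k * ln (2/(1+q)) > k * ln (1+\<delta>)" using gt k0 by simp
    ultimately have "2*k*ln (2/(1+q)) > ln (1/q)" using lnq by simp
    then show ?thesis unfolding bt_def s_def using l1 by (simp add: field_simps)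
  qed
  have rhp: "0 < rh" "rh < 1"
  proof -
    have "(1+\<delta>)*(1+q0) = 2" unfolding q0_def using a(3) by (simp add: field_simps)
    then have "(1+\<delta>)*(1+q) < 2" using qp a(3) by (smt (verit) mult_strict_left_mono)
    then show "rh < 1" unfolding rh_def by simp
    show "0 < rh" unfolding rh_def using qp a(3) by simp
  qed
  define M where "M n = nat \<lfloor>\<alpha> * real n\<rfloor>" for n
  have Mge: "real (M n) \<ge> \<alpha> * real n - 1" for n
    unfolding M_def using a(1) by linarith
  have Mtop: "filterlim (\<lambda>n. real (M n)) at_top sequentially"
  proof (rule filterlim_at_top_mono[OF _ always_eventually])
    show "LIM n sequentially. -1 + \<alpha> * real n :> at_top"
      by (rule filterlim_tendsto_add_at_top[OF tendsto_const]
          filterlim_tendsto_pos_mult_at_top[OF tendsto_const a(1) filterlim_real_sequentially])+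
    show "\<forall>n. -1 + \<alpha> * real n \<le> real (M n)" using Mge by (simp add: algebra_simps)
  qed
  have lnlim: "((\<lambda>n. ln (real (M n)) / real (M n)) \<longlongrightarrow> 0) sequentially"
    using filterlim_compose[OF lnx_lim Mtop] by simp
  have ev1: "eventually (\<lambda>n. ln (real (M n)) / real (M n) < 1/(2*k)) sequentially"
    using order_tendstoD(2)[OF lnlim] k0 by simp
  define b where "b n = (\<alpha>/2) powr (-bt) * real n powr (1 - bt)" for n
  have blim: "b \<longlonglongrightarrow> 0"
    unfolding b_def
    by (rule tendsto_mult_right_zero, rule tendsto_neg_powr[OF _ filterlim_real_sequentially])
      (use bt1 in simp)
  have ev2: "eventually (\<lambda>n. b n < 1/2) sequentially"
    using order_tendstoD(2)[OF blim, of "1/2"] by simp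
  have ev3: "eventually (\<lambda>n. real n \<ge> 4/\<alpha>) sequentially"
    using filterlim_real_sequentially unfolding filterlim_at_top by auto
  define B where "B n = 2 * b n + (2/(1+q)) * (rh powr \<alpha>)^n" for n
  have Blim: "B \<longlonglongrightarrow> 0"
  proof -
    have "rh powr \<alpha> < 1" using rhp a(1) by (simp add: powr_def mult_pos_neg)
    moreover have "rh powr \<alpha> > 0" using rhp by simp
    ultimately have "(\<lambda>n. (rh powr \<alpha>)^n) \<longlonglongrightarrow> 0" by (intro LIMSEQ_power_zero) simp
    from tendsto_add[OF tendsto_mult_right_zero[OF blim, of 2] tendsto_mult_right_zero[OF this, of "2/(1+q)"]]
    show ?thesis unfolding B_def by simp
  qed
  define S where "S n = (let m = nat \<lfloor>\<alpha> * real n\<rfloor> in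
            \<Sum>w\<in>{1..nat \<lfloor>lam * real n\<rfloor>}.
              real (n choose w) * (1 / 2 ^ m) *
              (1 + (1 - 2 * (k * ln (real m) / real m)) ^ w) ^ m)" for n
  have pw: "0 \<le> S n \<and> S n \<le> B n"
    if h1: "ln (real (M n)) / real (M n) < 1/(2*k)" and h2: "b n < 1/2" and h3: "real n \<ge> 4/\<alpha>" for n
  proof -
    define m where "m = M n"
    define c where "c = 2 * (k * ln (real m) / real m)"
    define x where "x = 1 - c"
    define N where "N = nat \<lfloor>lam * real n\<rfloor>"
    have Sdef: "S n = (\<Sum>w\<in>{1..N}. real (n choose w) * (1 / 2 ^ m) * (1 + x ^ w) ^ m)"
      unfolding S_def Let_def M_def m_def x_def c_def N_def by simp
    have an: "\<alpha> * real n \<ge> 4" using h3 a(1) by (simp add: field_simps)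
    have mge: "real m \<ge> \<alpha> * real n / 2" using Mge[of n] an m_def by linarith
    have m2: "real m \<ge> 2" using mge an by linarith
    have lnm: "ln (real m) > 0" using m2 by simp
    have c0: "c > 0" using k0 lnm m2 c_def by simp
    have c1: "c < 1"
    proof -
      have "ln (real m) / real m * (2*k) < 1/(2*k) * (2*k)"
        using h1 k0 m_def by (intro mult_strict_right_mono) auto
      then show ?thesis unfolding c_def using k0 by (simp add: field_simps)
    qed
    have x0: "0 < x" and x1: "x < 1" using c0 c1 x_def by auto
    have lnx: "ln x \<le> - c" using ln_le_minus_one[OF x0] x_def by simp
    have ecs: "exp (- c * s * real m) = real m powr (- bt)"
    proof -
      have "- c * s * real m = - bt * ln (real m)" unfolding c_def bt_def using m2 by (simp add: field_simps)
      then show ?thesis using m2 by (simp add: powr_def)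
    qed
    define r where "r = real n * real m powr (- bt)"
    have r0: "r \<ge> 0" unfolding r_def by simp
    have n0: "real n > 0" using an a(1) by (cases n) auto
    have rb: "r \<le> b n"
    proof -
      have "real m powr (- bt) \<le> (\<alpha> * real n / 2) powr (- bt)"
        by (rule powr_mono2') (use bt1 mge an in auto)
      also have "(\<alpha> * real n / 2) powr (- bt) = (\<alpha>/2) powr (- bt) * real n powr (- bt)"
      proof -
        have e: "\<alpha> * real n / 2 = (\<alpha>/2) * real n" by simp
        show ?thesis unfolding e using a(1) by (intro powr_mult)
      qed
      finally have "r \<le> real n * ((\<alpha>/2) powr (- bt) * real n powr (- bt))"
        unfolding r_def using n0 by (simp add: mult_left_mono)
      also have "\<dots> = b n"
      proof -
        have e2: "real n * real n powr (-bt) = real n powr (1 - bt)"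
          using powr_add[of "real n" 1 "-bt"] n0 by simp
        show ?thesis unfolding b_def e2[symmetric] by simp
      qed
      finally show ?thesis .
    qed
    have Nb: "real N \<le> lstar * real n"
    proof (cases "lam * real n \<ge> 0")
      case True
      then have "real N \<le> lam * real n" unfolding N_def by linarith
      also have "\<dots> \<le> lstar * real n" using a(9) n0 by simp
      finally show ?thesis .
    next
      case False
      then have "N = 0" unfolding N_def by simp
      then show ?thesis using a(6) n0 by simp
    qed
    have terms: "real (n choose w) * (1 / 2 ^ m) * (1 + x ^ w) ^ m \<le> r ^ w + real (n choose w) * ((1+q)/2) ^ m"
      if "w \<in> {1..N}" for w
      using term_bound[OF x0 x1 qp(1) qp(3) s_def lnx, of w n m] that ecs unfolding r_def by auto
    have "S n \<le> (\<Sum>w\<in>{1..N}. r ^ w + real (n choose w) * ((1+q)/2) ^ m)"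
      unfolding Sdef by (rule sum_mono) (rule terms)
    also have "\<dots> = (\<Sum>w\<in>{1..N}. r ^ w) + ((1+q)/2) ^ m * (\<Sum>w\<in>{1..N}. real (n choose w))"
      by (simp add: sum.distrib sum_distrib_left mult.commute)
    also have "\<dots> \<le> 2 * r + ((1+q)/2) ^ m * 2 powr (bin_entropy lstar * n)"
      by (intro add_mono mult_left_mono geom_bound binom_partial) (use r0 rb h2 a(6,7) Nb qp in auto)
    also have "2 powr (bin_entropy lstar * n) = (1+\<delta>) powr (\<alpha> * n)"
    proof -
      have "2 powr (\<alpha> * log 2 (1+\<delta>) * n) = (2 powr log 2 (1+\<delta>)) powr (\<alpha> * n)"
        by (simp add: powr_powr mult_ac)
      then show ?thesis unfolding a(8) using a(3) by simp
    qed
    also have "((1+q)/2) ^ m \<le> ((1+q)/2) powr (\<alpha> * n - 1)"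
    proof -
      have "((1+q)/2) ^ m = ((1+q)/2) powr (real m)" using qp by (simp add: powr_realpow)
      also have "\<dots> \<le> ((1+q)/2) powr (\<alpha> * n - 1)"
        by (rule powr_mono') (use Mge[of n] m_def qp in auto)
      finally show ?thesis .
    qed
    also have "((1+q)/2) powr (\<alpha> * n - 1) * (1+\<delta>) powr (\<alpha> * n) = (2/(1+q)) * (rh powr \<alpha>)^n"
    proof -
      have "((1+q)/2) powr (\<alpha> * n - 1) = ((1+q)/2) powr (\<alpha> * n) / ((1+q)/2)"
        using qp by (simp add: powr_diff)
      moreover have "((1+q)/2) powr (\<alpha> * n) * (1+\<delta>) powr (\<alpha> * n) = rh powr (\<alpha> * n)"
        unfolding rh_def using qp a(3) by (simp add: powr_mult[symmetric] mult.commute)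
      moreover have "rh powr (\<alpha> * n) = (rh powr \<alpha>)^n"
        using rhp by (simp add: powr_powr[symmetric] powr_realpow)
      ultimately show ?thesis by (simp add: field_simps)
    qed
    finally have up: "S n \<le> 2 * r + (2/(1+q)) * (rh powr \<alpha>)^n"
      using qp a(3) by (simp add: mult_right_mono)
    have "S n \<le> B n" unfolding B_def using up rb by linarith
    moreover have "0 \<le> S n" unfolding Sdef using x0 by (intro sum_nonneg) auto
    ultimately show ?thesis by simp
  qed
  have ev: "eventually (\<lambda>n. 0 \<le> S n \<and> S n \<le> B n) sequentially"
    using ev1 ev2 ev3 by eventually_elim (rule pw)
  have "S \<longlonglongrightarrow> 0"
    by (rule tendsto_sandwich[OF _ _ tendsto_const Blim]) (use ev in \<open>auto elim: eventually_mono\<close>)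
  then show ?thesis unfolding S_def .
qed

end
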